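(* For every positive integer $n$, the uniqueness property fails for the triple graph $\mathcal{T}_n$: there exist two vertices of $\mathcal{T}_n$ whose triples of integers have the same largest element but are not equal (not even up to permutation of their entries). More precisely, for every $j\ge 1$ the graph $\mathcal{T}_n$ contains vertices labelled \[ \Big(\breve K(S_n(0)),\ \breve K\big(S_n(0)^{5j+1}S_n(1)\big),\ \breve K\big(S_n(0)^{5j}S_n(1)\big)\Big) \quad\text{and}\quad \Big(\breve K\big(S_n(0)S_n(1)^{3j}\big),\ \breve K\big(S_n(0)S_n(1)^{3j+1}\big),\ \breve K(S_n(1))\Big), \] these two triples have equal largest element, and they are distinct triples.
   Context: For finite sequences of positive integers $\alpha=(a_1,\dots,a_k)$, $\beta=(b_1,\dots,b_m)$, the concatenation is $\alpha\beta=\alpha\oplus\beta=(a_1,\dots,a_k,b_1,\dots,b_m)$, and $\alpha^k$ denotes the concatenation of $k$ copies of $\alpha$. The continued fraction $[a_1;a_2:\dots:a_k]$ means $a_1+\cfrac{1}{a_2+\cfrac{1}{\ddots+\cfrac{1}{a_k}}}$. For a sequence $(a_1,\dots,a_k)$ of positive integers with $k\ge2$, the integer sine $\breve K(a_1,\dots,a_k)$ is the integer $c$ where $[a_1;a_2:\dots:a_{k-1}]=c/d$ with $\gcd(c,d)=1$, $c,d>0$ (note the last entry $a_k$ is omitted). On triples $(\alpha,\gamma,\beta)$ of finite sequences define $\mathcal L(\alpha,\gamma,\beta)=(\alpha,\alpha\gamma,\gamma)$ and $\mathcal R(\alpha,\gamma,\beta)=(\gamma,\gamma\beta,\beta)$.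 The graph $\mathcal G(\alpha,\beta)$ is the binary graph with root $(\alpha,\alpha\beta,\beta)$ whose vertices are all triples obtained from the root by finitely many applications of $\mathcal L,\mathcal R$, with an edge $(v,w)$ whenever $w=\mathcal L(v)$ or $w=\mathcal R(v)$. The triple graph of integers $X(\mathcal G(\alpha,\beta))$ is obtained by replacing each vertex $(\alpha',\gamma',\beta')$ by the integer triple $\chi(\alpha',\gamma',\beta')=(\breve K(\alpha'),\breve K(\gamma'),\breve K(\beta'))$ (and each edge $(v,w)$ by $(\chi(v),\chi(w))$). For a positive integer $n$ let $a_n=n^2+3$, $b_n=n^4+5n^2+5$, $S_n(0)=(na_n,na_n)$, $S_n(1)=(nb_n,nb_n)$, and $\mathcal T_n=X(\mathcal G(S_n(0),S_n(1)))$. *)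

theory Defs
  imports Complex_Main "HOL-Library.Multiset"
begin

fun cfrac :: "nat list \<Rightarrow> rat" where
  "cfrac [] = 0"
| "cfrac [a] = of_nat a"
| "cfrac (a # b # xs) = of_nat a + 1 / cfrac (b # xs)"

text \<open>Integer sine: numerator (in lowest terms, positive denominator) of the continued
fraction of the sequence with its last entry omitted (meaningful for length >= 2).\<close>
definition isin :: "nat list \<Rightarrow> int" where
  "isin xs = fst (quotient_of (cfrac (butlast xs)))"

type_synonym seqtriple = "nat list \<times> nat list \<times> nat list"

definition opL :: "seqtriple \<Rightarrow> seqtriple" where
  "opL t = (case t of (\<alpha>, \<gamma>, \<beta>) \<Rightarrow> (\<alpha>, \<alpha> @ \<gamma>, \<gamma>))"

definition opR :: "seqtriple \<Rightarrow> seqtriple" where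
  "opR t = (case t of (\<alpha>, \<gamma>, \<beta>) \<Rightarrow> (\<gamma>, \<gamma> @ \<beta>, \<beta>))"

inductive_set Gverts :: "nat list \<Rightarrow> nat list \<Rightarrow> seqtriple set" for \<alpha> \<beta> where
  root: "(\<alpha>, \<alpha> @ \<beta>, \<beta>) \<in> Gverts \<alpha> \<beta>"
| stepL: "v \<in> Gverts \<alpha> \<beta> \<Longrightarrow> opL v \<in> Gverts \<alpha> \<beta>"
| stepR: "v \<in> Gverts \<alpha> \<beta> \<Longrightarrow> opR v \<in> Gverts \<alpha> \<beta>"

definition chi :: "seqtriple \<Rightarrow> int \<times> int \<times> int" where
  "chi t = (case t of (\<alpha>, \<gamma>, \<beta>) \<Rightarrow> (isin \<alpha>, isin \<gamma>, isin \<beta>))"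

definition triple_graph_verts :: "nat list \<Rightarrow> nat list \<Rightarrow> (int \<times> int \<times> int) set" where
  "triple_graph_verts \<alpha> \<beta> = chi ` Gverts \<alpha> \<beta>"

definition lpow :: "nat list \<Rightarrow> nat \<Rightarrow> nat list" where
  "lpow xs k = concat (replicate k xs)"

definition an :: "nat \<Rightarrow> nat" where "an n = n^2 + 3"
definition bn :: "nat \<Rightarrow> nat" where "bn n = n^4 + 5*n^2 + 5"
definition S0 :: "nat \<Rightarrow> nat list" where "S0 n = [n * an n, n * an n]"
definition S1 :: "nat \<Rightarrow> nat list" where "S1 n = [n * bn n, n * bn n]"

definition T :: "nat \<Rightarrow> (int \<times> int \<times> int) set" where
  "T n = triple_graph_verts (S0 n) (S1 n)"

definition tmax :: "int \<times> int \<times> int \<Rightarrow> int" where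
  "tmax t = (case t of (a, b, c) \<Rightarrow> max a (max b c))"

definition tmset :: "int \<times> int \<times> int \<Rightarrow> int multiset" where
  "tmset t = (case t of (a, b, c) \<Rightarrow> {#a, b, c#})"

end

theory Submission imports Defs begin

fun K :: "nat list \<Rightarrow> int" where
  "K [] = 1"
| "K [a] = int a"
| "K (a # b # xs) = int a * K (b # xs) + K xs"

lemma K_pos: "\<forall>x\<in>set xs. x > 0 \<Longrightarrow> K xs > 0"
  by (induction xs rule: K.induct) (auto simp: add_pos_pos)

lemma K_coprime: "coprime (K (a # xs)) (K xs)"
proof (induction xs arbitrary: a)
  case Nil then show ?case by simp
next
  case (Cons b xs)
  have "coprime (K (b # xs)) (K xs)" by (rule Cons.IH)
  then have "coprime (K xs) (K (b # xs))" by (simp add: coprime_commute)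
  then have "coprime (K (b # xs)) (int a * K (b # xs) + K xs)"
    by (simp add: coprime_iff_gcd_eq_1 gcd_add_mult gcd.commute)
  then have "coprime (int a * K (b # xs) + K xs) (K (b # xs))"
    by (simp add: coprime_commute)
  then show ?case by simp
qed

lemma cfrac_K: "xs \<noteq> [] \<Longrightarrow> \<forall>x\<in>set xs. x > 0 \<Longrightarrow> cfrac xs = of_int (K xs) / of_int (K (tl xs))"
proof (induction xs rule: cfrac.induct)
  case (3 a b xs)
  have p: "K (b # xs) > 0" using 3 by (intro K_pos) auto
  have "cfrac (a # b # xs) = of_nat a + 1 / (of_int (K (b#xs)) / of_int (K xs))"
    using 3 by simp
  also have "\<dots> = of_int (K (a#b#xs)) / of_int (K (b#xs))"
    using p by (simp add: field_simps)
  finally show ?case by simp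
qed auto

lemma quot_K: "xs \<noteq> [] \<Longrightarrow> \<forall>x\<in>set xs. x > 0 \<Longrightarrow> quotient_of (cfrac xs) = (K xs, K (tl xs))"
proof -
  assume a: "xs \<noteq> []" "\<forall>x\<in>set xs. x > 0"
  then obtain y ys where xs: "xs = y # ys" by (cases xs) auto
  have p: "K ys > 0" using a xs by (intro K_pos) auto
  have c: "coprime (K xs) (K ys)" using K_coprime xs by simp
  have "cfrac xs = Fract (K xs) (K ys)" using cfrac_K[OF a] xs p by (simp add: Fract_of_int_quotient)
  then show ?thesis using p c xs by (simp add: quotient_of_Fract normalize_def coprime_iff_gcd_eq_1)
qed

fun fib :: "int \<Rightarrow> nat \<Rightarrow> int" where
  "fib x 0 = 0"
| "fib x (Suc 0) = 1"
| "fib x (Suc (Suc k)) = x * fib x (Suc k) + fib x k"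

lemma fib_add: "fib x (m + Suc k) = fib x (Suc k) * fib x (Suc m) + fib x k * fib x m"
proof -
  have "fib x (m + Suc k) = fib x (Suc k) * fib x (Suc m) + fib x k * fib x m \<and>
        fib x (m + Suc (Suc k)) = fib x (Suc (Suc k)) * fib x (Suc m) + fib x (Suc k) * fib x m"
  proof (induction k)
    case 0 then show ?case by simp
  next
    case (Suc k)
    from Suc have h1: "fib x (m + Suc k) = fib x (Suc k) * fib x (Suc m) + fib x k * fib x m"
      and h2: "fib x (m + Suc (Suc k)) = fib x (Suc (Suc k)) * fib x (Suc m) + fib x (Suc k) * fib x m" by blast+
    have "fib x (m + Suc (Suc (Suc k))) = x * fib x (m + Suc (Suc k)) + fib x (m + Suc k)"
      by (simp add: add.commute)
    also have "\<dots> = (x * fib x (Suc (Suc k)) + fib x (Suc k)) * fib x (Suc m) + (x * fib x (Suc k) + fib x k) * fib x m"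
      unfolding h1 h2 by (simp only: algebra_simps)
    also have "\<dots> = fib x (Suc (Suc (Suc k))) * fib x (Suc m) + fib x (Suc (Suc k)) * fib x m" by simp
    finally show ?case using Suc by blast
  qed
  then show ?thesis by simp
qed

lemma fibv: "fib x 2 = x" "fib x 3 = x^2+1" "fib x 4 = x^3 + 2*x" "fib x 5 = x^4+3*x^2+1"
  "fib x 6 = x^5 + 4*x^3+3*x" "fib x 7 = x^6+5*x^4+6*x^2+1"
  "fib x 8 = x^7+6*x^5+10*x^3+4*x" "fib x 9 = x^8+7*x^6+15*x^4+10*x^2+1"
  "fib x 10 = x^9+8*x^7+21*x^5+20*x^3+5*x"
  by (simp_all add: eval_nat_numeral algebra_simps power2_eq_square power3_eq_cube power_numeral_reduce)

lemma rec3: "fib x (m+6) = x*(x^2+3) * fib x (m+3) + fib x m"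
proof -
  have a: "fib x (m+6) = fib x 6 * fib x (Suc m) + fib x 5 * fib x m"
    using fib_add[of x m 5] by (simp add: eval_nat_numeral)
  have b: "fib x (m+3) = fib x 3 * fib x (Suc m) + fib x 2 * fib x m"
    using fib_add[of x m 2] by (simp add: eval_nat_numeral)
  show ?thesis unfolding a b fibv by (simp add: algebra_simps power2_eq_square power3_eq_cube power_numeral_reduce)
qed

lemma rec5: "fib x (m+10) = x*(x^4+5*x^2+5) * fib x (m+5) + fib x m"
proof -
  have a: "fib x (m+10) = fib x 10 * fib x (Suc m) + fib x 9 * fib x m"
    using fib_add[of x m 9] by (simp add: eval_nat_numeral)
  have b: "fib x (m+5) = fib x 5 * fib x (Suc m) + fib x 4 * fib x m"
    using fib_add[of x m 4] by (simp add: eval_nat_numeral)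
  show ?thesis unfolding a b fibv by (simp add: algebra_simps power2_eq_square power3_eq_cube power_numeral_reduce)
qed

lemma main_id:
  fixes x :: int
  defines "s \<equiv> x*(x^2+3)" and "t \<equiv> x*(x^4+5*x^2+5)"
  shows "fib x 5 * (t * fib x (m+9) + fib x (m+6)) = fib x 3 * ((s^2+1) * fib x (m+10) + s * fib x (m+5))"
proof -
  have e: "\<And>k. fib x (m + Suc k) = fib x (Suc k) * fib x (Suc m) + fib x k * fib x m" by (rule fib_add)
  have a: "fib x (m+10) = fib x 10 * fib x (Suc m) + fib x 9 * fib x m"
   and b: "fib x (m+9) = fib x 9 * fib x (Suc m) + fib x 8 * fib x m"
   and c: "fib x (m+6) = fib x 6 * fib x (Suc m) + fib x 5 * fib x m"
   and d: "fib x (m+5) = fib x 5 * fib x (Suc m) + fib x 4 * fib x m"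
    using e[of 9] e[of 8] e[of 5] e[of 4] by (simp_all add: eval_nat_numeral)
  show ?thesis unfolding a b c d fibv s_def t_def by (simp add: algebra_simps power2_eq_square power3_eq_cube power_numeral_reduce)
qed

lemma lpow_rep: "lpow [a, a] m = replicate (2*m) a"
  by (induction m) (auto simp: lpow_def)

lemma lpow_Suc: "lpow xs (Suc m) = xs @ lpow xs m"
  by (simp add: lpow_def)

lemma lpow_Suc2: "lpow xs (Suc m) = lpow xs m @ xs"
  by (induction m) (simp_all add: lpow_def)

lemma vertL: "(S0 n, lpow (S0 n) (Suc m) @ S1 n, lpow (S0 n) m @ S1 n) \<in> Gverts (S0 n) (S1 n)"
proof (induction m)
  case 0 then show ?case using Gverts.root[of "S0 n" "S1 n"] by (simp add: lpow_def)
next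
  case (Suc m)
  from Gverts.stepL[OF Suc] show ?case by (simp add: opL_def lpow_Suc)
qed

lemma vertR: "(S0 n @ lpow (S1 n) m, S0 n @ lpow (S1 n) (Suc m), S1 n) \<in> Gverts (S0 n) (S1 n)"
proof (induction m)
  case 0 then show ?case using Gverts.root[of "S0 n" "S1 n"] by (simp add: lpow_def)
next
  case (Suc m)
  from Gverts.stepR[OF Suc] show ?case by (simp add: opR_def lpow_Suc2)
qed

lemma H_rec: "K (replicate (Suc (Suc k)) a @ [b]) = int a * K (replicate (Suc k) a @ [b]) + K (replicate k a @ [b])"
  by simp

lemma G_rec: "K (replicate (Suc (Suc k)) a) = int a * K (replicate (Suc k) a) + K (replicate k a)"
  by simp

lemma H_formula:
  fixes x :: int and s t :: nat
  assumes "int s = x*(x^2+3)"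
  shows "fib x 3 * K (replicate k s @ [t]) = int t * fib x (3*k+3) + fib x (3*k)"
proof (induction k rule: nat_less_induct)
  case (1 k)
  show ?case
  proof (cases k)
    case 0 then show ?thesis by (simp add: fibv)
  next
    case (Suc k1)
    show ?thesis
    proof (cases k1)
      case 0
      have "fib x 6 = int s * fib x 3" using rec3[of x 0] assms by simp
      then show ?thesis using Suc 0 by (simp add: algebra_simps)
    next
      case (Suc k2)
      have i1: "fib x 3 * K (replicate k1 s @ [t]) = int t * fib x (3*k1+3) + fib x (3*k1)"
        using 1 \<open>k = Suc k1\<close> by simp
      have i2: "fib x 3 * K (replicate k2 s @ [t]) = int t * fib x (3*k2+3) + fib x (3*k2)"
        using 1 \<open>k = Suc k1\<close> Suc by simp
      have k: "k = Suc (Suc k2)" using \<open>k = Suc k1\<close> Suc by simp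
      have "fib x 3 * K (replicate k s @ [t]) = int s * (fib x 3 * K (replicate k1 s @ [t])) + fib x 3 * K (replicate k2 s @ [t])"
        using k Suc by (simp add: algebra_simps)
      also have "\<dots> = int t * (int s * fib x (3*k2+6) + fib x (3*k2+3)) + (int s * fib x (3*k2+3) + fib x (3*k2))"
        unfolding i1 i2 using Suc by (simp add: algebra_simps)
      also have "\<dots> = int t * fib x (3*k2+9) + fib x (3*k2+6)"
        using rec3[of x "3*k2+3"] rec3[of x "3*k2"] assms by (simp add: add.assoc)
      finally show ?thesis using k by (simp add: add.commute)
    qed
  qed
qed

lemma G_formula:
  fixes x :: int and t :: nat
  assumes "int t = x*(x^4+5*x^2+5)"
  shows "fib x 5 * K (replicate k t) = fib x (5*k+5)"
proof (induction k rule: nat_less_induct)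
  case (1 k)
  show ?case
  proof (cases k)
    case 0 then show ?thesis by simp
  next
    case (Suc k1)
    show ?thesis
    proof (cases k1)
      case 0
      have "fib x 10 = int t * fib x 5" using rec5[of x 0] assms by simp
      then show ?thesis using Suc 0 by (simp add: algebra_simps)
    next
      case (Suc k2)
      have i1: "fib x 5 * K (replicate k1 t) = fib x (5*k1+5)"
        using 1 \<open>k = Suc k1\<close> by simp
      have i2: "fib x 5 * K (replicate k2 t) = fib x (5*k2+5)"
        using 1 \<open>k = Suc k1\<close> Suc by simp
      have k: "k = Suc (Suc k2)" using \<open>k = Suc k1\<close> Suc by simp
      have "fib x 5 * K (replicate k t) = int t * (fib x 5 * K (replicate k1 t)) + fib x 5 * K (replicate k2 t)"
        using k Suc by (simp add: algebra_simps)
      also have "\<dots> = int t * fib x (5*k2+10) + fib x (5*k2+5)"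
        unfolding i1 i2 using Suc by (simp add: algebra_simps)
      also have "\<dots> = fib x (5*k2+15)"
        using rec5[of x "5*k2+5"] assms by (simp add: add.assoc)
      finally show ?thesis using k by (simp add: add.commute)
    qed
  qed
qed

lemma K_cons_ge: assumes a: "a > 0" and xs: "\<forall>y\<in>set xs. y > 0" shows "K xs \<le> K (a # xs)"
proof (cases xs)
  case Nil then show ?thesis using a by simp
next
  case (Cons b ys)
  have "K xs > 0" using xs by (rule K_pos)
  moreover have "K ys > 0" using xs Cons by (intro K_pos) auto
  ultimately have "K xs \<le> int a * K xs" using a by simp
  then show ?thesis using Cons \<open>K ys > 0\<close> by simp
qed

lemma K_ge_hd: assumes a: "a > 0" and xs: "\<forall>y\<in>set xs. y > 0" shows "int a \<le> K (a # xs)"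
proof (cases xs)
  case Nil then show ?thesis using a by simp
next
  case (Cons b ys)
  have "K xs > 0" using xs by (rule K_pos)
  moreover have "K ys > 0" using xs Cons by (intro K_pos) auto
  ultimately have "int a \<le> int a * K xs" using a by simp
  then show ?thesis using Cons \<open>K ys > 0\<close> by simp
qed

lemma K_aab: "K (a # a # replicate (Suc k) b) = (int a^2+1) * K (replicate (Suc k) b) + int a * K (replicate k b)"
  by (cases k) (simp_all add: algebra_simps power2_eq_square)

lemma G_mono: "b > 0 \<Longrightarrow> K (replicate k b) \<le> K (replicate (Suc k) b)"
  using K_cons_ge[of b "replicate k b"] by simp

lemma G_pos: "b > 0 \<Longrightarrow> K (replicate k b) > 0"
  by (rule K_pos) simp

lemma butlast_rep: "butlast (replicate (Suc k) a) = replicate k a"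
  by (induction k) auto

theorem theorem1:
  fixes n j :: nat
  assumes "n \<ge> 1" and "j \<ge> 1"
  defines "t1 \<equiv> (isin (S0 n), isin (lpow (S0 n) (5*j+1) @ S1 n), isin (lpow (S0 n) (5*j) @ S1 n))"
      and "t2 \<equiv> (isin (S0 n @ lpow (S1 n) (3*j)), isin (S0 n @ lpow (S1 n) (3*j+1)), isin (S1 n))"
  shows "t1 \<in> T n \<and> t2 \<in> T n \<and> tmax t1 = tmax t2 \<and> t1 \<noteq> t2 \<and> tmset t1 \<noteq> tmset t2"
proof -
  define s where "s = n * an n"
  define t where "t = n * bn n"
  define x where "x = int n"
  have hs: "int s = x*(x^2+3)" by (simp add: s_def x_def an_def)
  have ht: "int t = x*(x^4+5*x^2+5)" by (simp add: t_def x_def bn_def)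
  have sp: "s > 0" using assms by (simp add: s_def an_def)
  have tp: "t > 0" using assms by (simp add: t_def bn_def)
  have st: "s < t" unfolding s_def t_def an_def bn_def using assms
    by (intro mult_strict_left_mono) (auto simp: power2_eq_square power4_eq_xxxx)
  have S0: "S0 n = [s, s]" by (simp add: S0_def s_def)
  have S1: "S1 n = [t, t]" by (simp add: S1_def t_def)
  have isinK: "isin xs = K (butlast xs)" if "butlast xs \<noteq> []" "\<forall>y\<in>set (butlast xs). y > 0" for xs
    unfolding isin_def using quot_K[OF that] by simp
  define A where "A = K (replicate (10*j+2) s @ [t])"
  define B where "B = K (replicate (10*j) s @ [t])"
  define p where "p = 6*j - 2"
  define C where "C = K (s # s # replicate (Suc p) t)"
  define D where "D = K (s # s # replicate (Suc (Suc (Suc p))) t)"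
  have bl1: "butlast (lpow (S0 n) m @ S1 n) = replicate (2*m) s @ [t]" for m
    by (simp add: S0 S1 lpow_rep butlast_append)
  have e1: "isin (S0 n) = int s" by (simp add: S0 isin_def)
  have e2: "isin (lpow (S0 n) (5*j+1) @ S1 n) = A"
    unfolding A_def by (subst isinK) (auto simp: bl1 sp tp)
  have e3: "isin (lpow (S0 n) (5*j) @ S1 n) = B"
    unfolding B_def by (subst isinK) (auto simp: bl1 sp tp)
  have e6: "isin (S1 n) = int t" by (simp add: S1 isin_def)
  have pj: "6*j = Suc (Suc p)" using assms by (simp add: p_def)
  have r1: "lpow (S1 n) (3*j) = replicate (Suc (Suc p)) t"
    using lpow_rep[of t "3*j"] pj by (simp add: S1)
  have r2: "lpow (S1 n) (Suc (3*j)) = replicate (Suc (Suc (Suc (Suc p)))) t"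
    using lpow_rep[of t "3*j+1"] pj by (simp add: S1)
  have bl4: "butlast (S0 n @ lpow (S1 n) (3*j)) = s # s # replicate (Suc p) t"
    unfolding r1 S0 by (simp del: replicate_Suc add: butlast_append butlast_rep)
  have bl5: "butlast (S0 n @ lpow (S1 n) (Suc (3*j))) = s # s # replicate (Suc (Suc (Suc p))) t"
    unfolding r2 S0 by (simp del: replicate_Suc add: butlast_append butlast_rep)
  have e4: "isin (S0 n @ lpow (S1 n) (3*j)) = C"
    unfolding C_def by (subst isinK) (auto simp: bl4 sp tp)
  have e5: "isin (S0 n @ lpow (S1 n) (3*j+1)) = D"
    unfolding D_def by (subst isinK) (auto simp: bl5 sp tp)
  have t1: "t1 = (int s, A, B)" unfolding t1_def e1 e2 e3 ..
  have t2: "t2 = (C, D, int t)" unfolding t2_def e4 e5[unfolded Suc_eq_plus1] e6 ..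
  have m1: "t1 \<in> T n"
    unfolding T_def triple_graph_verts_def t1_def
    using vertL[of n "5*j"] by (force simp: chi_def)
  have m2: "t2 \<in> T n"
    unfolding T_def triple_graph_verts_def t2_def
    using vertR[of n "3*j"] by (force simp: chi_def)
  have BA: "B \<le> A"
  proof -
    have "replicate (10*j+2) s @ [t] = s # s # (replicate (10*j) s @ [t])" by simp
    then have "A = K (s # s # (replicate (10*j) s @ [t]))" by (simp add: A_def)
    moreover have "K (s # (replicate (10*j) s @ [t])) \<le> K (s # s # (replicate (10*j) s @ [t]))"
      by (rule K_cons_ge) (use sp tp in auto)
    moreover have "B \<le> K (s # (replicate (10*j) s @ [t]))" unfolding B_def
      by (rule K_cons_ge) (use sp tp in auto)
    ultimately show ?thesis by linarith
  qed
  have sA: "int s \<le> A"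
  proof -
    have "A = K (s # (replicate (10*j+1) s @ [t]))" by (simp add: A_def)
    then show ?thesis using K_ge_hd[of s "replicate (10*j+1) s @ [t]"] sp tp by auto
  qed
  let ?G = "\<lambda>k. K (replicate k t)"
  have Gm: "?G k \<le> ?G (Suc k)" for k using G_mono tp by blast
  have Gp: "?G k > 0" for k using G_pos tp by blast
  have C': "C = (int s^2+1) * ?G (Suc p) + int s * ?G p" unfolding C_def by (rule K_aab)
  have D': "D = (int s^2+1) * ?G (Suc (Suc (Suc p))) + int s * ?G (Suc (Suc p))" unfolding D_def by (rule K_aab)
  have CD: "C \<le> D"
  proof -
    have "?G (Suc p) \<le> ?G (Suc (Suc (Suc p)))" using Gm[of "Suc p"] Gm[of "Suc (Suc p)"] by linarith
    moreover have "?G p \<le> ?G (Suc (Suc p))" using Gm[of p] Gm[of "Suc p"] by linarith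
    ultimately show ?thesis unfolding C' D'
      by (intro add_mono mult_left_mono) auto
  qed
  have sC: "int s < C"
  proof -
    have a1: "int s * 1 \<le> int s * int s" using sp by (intro mult_left_mono) auto
    have a2: "(int s^2+1) * 1 \<le> (int s^2+1) * ?G (Suc p)" using Gp[of "Suc p"] by (intro mult_left_mono) auto
    have a3: "0 \<le> int s * ?G p" using Gp[of p] by simp
    have a1': "int s \<le> int s^2" using a1 by (simp add: power2_eq_square)
    have a2': "int s^2+1 \<le> (int s^2+1) * ?G (Suc p)" using a2 by (simp only: mult.right_neutral)
    show ?thesis unfolding C' using a1' a2' a3 by linarith
  qed
  have tD: "int t \<le> D"
  proof -
    have "int t \<le> ?G (Suc (Suc (Suc p)))" using K_ge_hd[of t "replicate (Suc (Suc p)) t"] tp by simp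
    also have "\<dots> = 1 * ?G (Suc (Suc (Suc p)))" by simp
    also have "\<dots> \<le> (int s^2+1) * ?G (Suc (Suc (Suc p)))" using Gp[of "Suc (Suc (Suc p))"]
      by (intro mult_right_mono) auto
    also have "\<dots> \<le> D" unfolding D' using Gp[of "Suc (Suc p)"] by simp
    finally show ?thesis .
  qed
  have AD: "A = D"
  proof -
    have f3: "fib x 3 > 0" by (simp add: fibv add_pos_nonneg)
    have f5: "fib x 5 > 0" by (simp add: fibv add_pos_nonneg)
    have hA: "fib x 3 * A = int t * fib x (30*j+9) + fib x (30*j+6)"
      unfolding A_def using H_formula[OF hs, of "10*j+2" t] by (simp add: algebra_simps)
    have g1: "fib x 5 * ?G (Suc (Suc (Suc p))) = fib x (30*j+10)"
    proof -
      have "5 * Suc (Suc (Suc p)) + 5 = 30*j+10" using pj by simp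
      then show ?thesis using G_formula[OF ht, of "Suc (Suc (Suc p))"] by metis
    qed
    have g2: "fib x 5 * ?G (Suc (Suc p)) = fib x (30*j+5)"
    proof -
      have "5 * Suc (Suc p) + 5 = 30*j+5" using pj by simp
      then show ?thesis using G_formula[OF ht, of "Suc (Suc p)"] by metis
    qed
    have "fib x 5 * D = (int s^2+1) * fib x (30*j+10) + int s * fib x (30*j+5)"
      unfolding D' g1[symmetric] g2[symmetric] by (simp add: algebra_simps)
    then have "fib x 3 * (fib x 5 * D) = fib x 5 * (fib x 3 * A)"
      unfolding hA using main_id[of x "30*j"] hs ht by (simp add: algebra_simps)
    then have "(fib x 3 * fib x 5) * D = (fib x 3 * fib x 5) * A" by (simp add: algebra_simps)
    then show ?thesis using f3 f5 by simp
  qed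
  have max1: "tmax t1 = A" using BA sA by (simp add: t1 tmax_def)
  have max2: "tmax t2 = D" using CD tD by (simp add: t2 tmax_def)
  have ms: "tmset t1 \<noteq> tmset t2"
  proof
    assume "tmset t1 = tmset t2"
    moreover have "int s \<in># tmset t1" by (simp add: t1 tmset_def)
    moreover have "int s \<notin># tmset t2" using sC CD st by (auto simp: t2 tmset_def)
    ultimately show False by simp
  qed
  then have "t1 \<noteq> t2" by auto
  then show ?thesis using m1 m2 max1 max2 AD ms by simp
qed

end
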